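(* Let $\mathcal L$ be an optionality-differentiating choice logic. Then for all $\mathcal L$-formulas $A,B$: $A\equiv^{s}_{\mathcal L}B$ if and only if $A\equiv^{\mathrm{full}}_{\mathcal L}B$.
   Context: Fix a countably infinite set $\mathcal U$ of propositional variables. Let $\mathbb N=\{1,2,3,\dots\}$ and $\overline{\mathbb N}=\mathbb N\cup\{\infty\}$, with $n<\infty$ for all $n\in\mathbb N$. An interpretation is a set $\mathcal I\subseteq\mathcal U$ (the variables set to true). A choice logic $\mathcal L$ is specified by a finite set $C_{\mathcal L}$ of binary connective symbols disjoint from $\{\neg,\land,\lor\}$ and, for each $\circ\in C_{\mathcal L}$, a function $\mathrm{opt}_\circ:\mathbb N^2\to\mathbb N$ with $\mathrm{opt}_\circ(k,\ell)\le (k+1)(\ell+1)$ for all $k,\ell$, and a function $\deg_\circ:\mathbb N^2\times\overline{\mathbb N}^2\to\overline{\mathbb N}$ such that for all $k,\ell\in\mathbb N$, $m,n\in\overline{\mathbb N}$, either $\deg_\circ(k,\ell,m,n)\le \mathrm{opt}_\circ(k,\ell)$ or $\deg_\circ(k,\ell,m,n)=\infty$. The $\mathcal L$-formulas are built from variables in $\mathcal U$ using unary $\neg$ and binary $\land,\lor$ and the connectives in $C_{\mathcal L}$. The optionality $\mathrm{opt}_{\mathcal L}$ of formulas is defined by: $\mathrm{opt}_{\mathcal L}(a)=1$ for $a\in\mathcal U$; $\mathrm{opt}_{\mathcal L}(\neg F)=1$; $\mathrm{opt}_{\mathcal L}(F\land G)=\mathrm{opt}_{\mathcal L}(F\lor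 G)=\max(\mathrm{opt}_{\mathcal L}(F),\mathrm{opt}_{\mathcal L}(G))$; $\mathrm{opt}_{\mathcal L}(F\circ G)=\mathrm{opt}_\circ(\mathrm{opt}_{\mathcal L}(F),\mathrm{opt}_{\mathcal L}(G))$ for $\circ\in C_{\mathcal L}$. The satisfaction degree $\deg_{\mathcal L}(\mathcal I,F)\in\overline{\mathbb N}$ is defined by: $\deg_{\mathcal L}(\mathcal I,a)=1$ if $a\in\mathcal I$ and $\infty$ otherwise; $\deg_{\mathcal L}(\mathcal I,\neg F)=1$ if $\deg_{\mathcal L}(\mathcal I,F)=\infty$ and $\infty$ otherwise; $\deg_{\mathcal L}(\mathcal I,F\land G)=\max(\deg_{\mathcal L}(\mathcal I,F),\deg_{\mathcal L}(\mathcal I,G))$; $\deg_{\mathcal L}(\mathcal I,F\lor G)=\min(\deg_{\mathcal L}(\mathcal I,F),\deg_{\mathcal L}(\mathcal I,G))$; $\deg_{\mathcal L}(\mathcal I,F\circ G)=\deg_\circ(\mathrm{opt}_{\mathcal L}(F),\mathrm{opt}_{\mathcal L}(G),\deg_{\mathcal L}(\mathcal I,F),\deg_{\mathcal L}(\mathcal I,G))$ for $\circ\in C_{\mathcal L}$. An interpretation $\mathcal I$ is a preferred model of $F$, written $\mathcal I\in\mathrm{Pref}_{\mathcal L}(F)$, if $\deg_{\mathcal L}(\mathcal I,F)\ne\infty$ and $\deg_{\mathcal L}(\mathcal I,F)\le\deg_{\mathcal L}(\mathcal J,F)$ for all interpretations $\mathcal J$. $F[A/B]$ denotes the formula obtained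 from $F$ by replacing an occurrence of the subformula $A$ by $B$ (and equals $F$ if $A$ does not occur in $F$). Two $\mathcal L$-formulas $A,B$ are degree-equivalent, $A\equiv^{\deg}_{\mathcal L}B$, if $\deg_{\mathcal L}(\mathcal I,A)=\deg_{\mathcal L}(\mathcal I,B)$ for all interpretations $\mathcal I$; they are fully equivalent, $A\equiv^{\mathrm{full}}_{\mathcal L}B$, if $A\equiv^{\deg}_{\mathcal L}B$ and $\mathrm{opt}_{\mathcal L}(A)=\mathrm{opt}_{\mathcal L}(B)$; they are strongly equivalent, $A\equiv^{s}_{\mathcal L}B$, if $\mathrm{Pref}_{\mathcal L}(F)=\mathrm{Pref}_{\mathcal L}(F[A/B])$ for all $\mathcal L$-formulas $F$. $\mathcal L$ is optionality-differentiating if for all $\mathcal L$-formulas $A,B$ with $\mathrm{opt}_{\mathcal L}(A)\neq\mathrm{opt}_{\mathcal L}(B)$ there is an $\mathcal L$-formula $F$ with $F\not\equiv^{\deg}_{\mathcal L}F[A/B]$. *)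

theory Defs
  imports Main "HOL-Library.Extended_Nat"
begin

text \<open>Propositional variables: the countably infinite set U is rendered as type nat.
  Connective symbols of a choice logic are elements of a set C of an arbitrary type 'c;
  the classical connectives are separate datatype constructors, hence disjoint from C.
  Degrees live in enat, where the satisfaction degrees used are 1,2,... or \<infinity>.\<close>

datatype 'c form =
    Var nat
  | Neg "'c form"
  | Conj "'c form" "'c form"
  | Disj "'c form" "'c form"
  | Conn 'c "'c form" "'c form"

text \<open>A choice logic: a finite set C of connectives, with optionality functions
  opt c : N^2 \<rightarrow> N and degree functions dg c : N^2 \<times> Nbar^2 \<rightarrow> Nbar
  (constraints imposed on N = {1,2,..}, Nbar = N \<union> {\<infinity>}).\<close>

definition choice_logic ::
  "'c set \<Rightarrow> ('c \<Rightarrow> nat \<Rightarrow> nat \<Rightarrow> nat) \<Rightarrow> ('c \<Rightarrow> nat \<Rightarrow> nat \<Rightarrow> enat \<Rightarrow> enat \<Rightarrow> enat) \<Rightarrow> bool"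
where
  "choice_logic C opt dg \<longleftrightarrow>
     finite C \<and>
     (\<forall>c\<in>C. \<forall>k l. 1 \<le> k \<longrightarrow> 1 \<le> l \<longrightarrow>
         1 \<le> opt c k l \<and> opt c k l \<le> (k + 1) * (l + 1)) \<and>
     (\<forall>c\<in>C. \<forall>k l m n. 1 \<le> k \<longrightarrow> 1 \<le> l \<longrightarrow> 1 \<le> m \<longrightarrow> 1 \<le> n \<longrightarrow>
         1 \<le> dg c k l m n \<and>
         (dg c k l m n \<le> enat (opt c k l) \<or> dg c k l m n = \<infinity>))"

fun wf_form :: "'c set \<Rightarrow> 'c form \<Rightarrow> bool" where
  "wf_form C (Var a) = True"
| "wf_form C (Neg F) = wf_form C F"
| "wf_form C (Conj F G) = (wf_form C F \<and> wf_form C G)"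
| "wf_form C (Disj F G) = (wf_form C F \<and> wf_form C G)"
| "wf_form C (Conn c F G) = (c \<in> C \<and> wf_form C F \<and> wf_form C G)"

fun fopt :: "('c \<Rightarrow> nat \<Rightarrow> nat \<Rightarrow> nat) \<Rightarrow> 'c form \<Rightarrow> nat" where
  "fopt opt (Var a) = 1"
| "fopt opt (Neg F) = 1"
| "fopt opt (Conj F G) = max (fopt opt F) (fopt opt G)"
| "fopt opt (Disj F G) = max (fopt opt F) (fopt opt G)"
| "fopt opt (Conn c F G) = opt c (fopt opt F) (fopt opt G)"

fun fdeg :: "('c \<Rightarrow> nat \<Rightarrow> nat \<Rightarrow> nat) \<Rightarrow> ('c \<Rightarrow> nat \<Rightarrow> nat \<Rightarrow> enat \<Rightarrow> enat \<Rightarrow> enat)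
             \<Rightarrow> nat set \<Rightarrow> 'c form \<Rightarrow> enat" where
  "fdeg opt dg I (Var a) = (if a \<in> I then 1 else \<infinity>)"
| "fdeg opt dg I (Neg F) = (if fdeg opt dg I F = \<infinity> then 1 else \<infinity>)"
| "fdeg opt dg I (Conj F G) = max (fdeg opt dg I F) (fdeg opt dg I G)"
| "fdeg opt dg I (Disj F G) = min (fdeg opt dg I F) (fdeg opt dg I G)"
| "fdeg opt dg I (Conn c F G) =
     dg c (fopt opt F) (fopt opt G) (fdeg opt dg I F) (fdeg opt dg I G)"

definition pref :: "('c \<Rightarrow> nat \<Rightarrow> nat \<Rightarrow> nat) \<Rightarrow> ('c \<Rightarrow> nat \<Rightarrow> nat \<Rightarrow> enat \<Rightarrow> enat \<Rightarrow> enat)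
             \<Rightarrow> 'c form \<Rightarrow> nat set set" where
  "pref opt dg F = {I. fdeg opt dg I F \<noteq> \<infinity> \<and> (\<forall>J. fdeg opt dg I F \<le> fdeg opt dg J F)}"

inductive replace_occ :: "'c form \<Rightarrow> 'c form \<Rightarrow> 'c form \<Rightarrow> 'c form \<Rightarrow> bool"
  for A B where
  here: "replace_occ A B A B"
| neg: "replace_occ A B F F' \<Longrightarrow> replace_occ A B (Neg F) (Neg F')"
| conjL: "replace_occ A B F F' \<Longrightarrow> replace_occ A B (Conj F G) (Conj F' G)"
| conjR: "replace_occ A B G G' \<Longrightarrow> replace_occ A B (Conj F G) (Conj F G')"
| disjL: "replace_occ A B F F' \<Longrightarrow> replace_occ A B (Disj F G) (Disj F' G)"
| disjR: "replace_occ A B G G' \<Longrightarrow> replace_occ A B (Disj F G) (Disj F G')"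
| connL: "replace_occ A B F F' \<Longrightarrow> replace_occ A B (Conn c F G) (Conn c F' G)"
| connR: "replace_occ A B G G' \<Longrightarrow> replace_occ A B (Conn c F G) (Conn c F G')"

definition deg_equiv where
  "deg_equiv opt dg A B \<longleftrightarrow> (\<forall>I. fdeg opt dg I A = fdeg opt dg I B)"

definition full_equiv where
  "full_equiv opt dg A B \<longleftrightarrow> deg_equiv opt dg A B \<and> fopt opt A = fopt opt B"

text \<open>Strong equivalence: Pref(F) = Pref(F[A/B]) for all L-formulas F (if A does not
  occur in F then F[A/B] = F and the condition holds trivially).\<close>
definition strong_equiv where
  "strong_equiv C opt dg A B \<longleftrightarrow>
     (\<forall>F F'. wf_form C F \<longrightarrow> replace_occ A B F F' \<longrightarrow> pref opt dg F = pref opt dg F')"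

definition opt_differentiating where
  "opt_differentiating C opt dg \<longleftrightarrow>
     (\<forall>A B. wf_form C A \<longrightarrow> wf_form C B \<longrightarrow> fopt opt A \<noteq> fopt opt B \<longrightarrow>
        (\<exists>F F'. wf_form C F \<and> replace_occ A B F F' \<and> \<not> deg_equiv opt dg F F'))"

end

theory Submission
  imports Defs
begin

fun vars :: "'c form \<Rightarrow> nat list" where
  "vars (Var a) = [a]"
| "vars (Neg F) = vars F"
| "vars (Conj F G) = vars F @ vars G"
| "vars (Disj F G) = vars F @ vars G"
| "vars (Conn c F G) = vars F @ vars G"

lemma coinc: "(\<forall>x\<in>set (vars F). x \<in> I \<longleftrightarrow> x \<in> J) \<Longrightarrow> fdeg opt dg I F = fdeg opt dg J F"
  by (induction F) auto

fun chi :: "nat set \<Rightarrow> nat list \<Rightarrow> 'c form" where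
  "chi I [] = Disj (Var 0) (Neg (Var 0))"
| "chi I (x#xs) = Conj (if x \<in> I then Var x else Neg (Var x)) (chi I xs)"

lemma chi_wf: "wf_form C (chi I xs)"
  by (induction xs) auto

lemma chi_deg: "fdeg opt dg J (chi I xs) = (if \<forall>x\<in>set xs. (x\<in>J \<longleftrightarrow> x\<in>I) then 1 else \<infinity>)"
  by (induction xs) (auto simp: max_def)

lemma pos: assumes "choice_logic C opt dg" "wf_form C F"
  shows "1 \<le> fopt opt F \<and> 1 \<le> fdeg opt dg I F"
  using assms(2)
proof (induction F)
  case (Conn c F G)
  then show ?case using assms(1) unfolding choice_logic_def by auto
qed (auto simp: le_max_iff_disj min_def)

lemma full_repl: "replace_occ A B F F' \<Longrightarrow> full_equiv opt dg A B \<Longrightarrow> full_equiv opt dg F F'"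
  by (induction rule: replace_occ.induct) (auto simp: full_equiv_def deg_equiv_def)

lemma repl_comp: "replace_occ F F' G G' \<Longrightarrow> replace_occ A B F F' \<Longrightarrow> replace_occ A B G G'"
  by (induction rule: replace_occ.induct) (auto intro: replace_occ.intros)

lemma repl_wf: "replace_occ A B F F' \<Longrightarrow> wf_form C F \<Longrightarrow> wf_form C B \<Longrightarrow> wf_form C F'"
  by (induction rule: replace_occ.induct) auto

lemma strong_deg:
  fixes A B :: "'c form"
  assumes cl: "choice_logic C opt dg" and wA: "wf_form C A" and wB: "wf_form C B"
    and st: "strong_equiv C opt dg A B"
  shows "deg_equiv opt dg A B"
proof (rule ccontr)
  assume "\<not> deg_equiv opt dg A B"
  then obtain I where ne: "fdeg opt dg I A \<noteq> fdeg opt dg I B" unfolding deg_equiv_def by auto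
  define k where "k = fdeg opt dg I A"
  define m where "m = fdeg opt dg I B"
  define xs where "xs = vars A @ vars B"
  obtain z where z: "z \<notin> set xs"
    using ex_new_if_finite[OF infinite_UNIV_nat, of "set xs"] by auto
  define X :: "'c form" where "X = chi I xs"
  define F where "F = Disj (Conj A (Conj (Neg (Var z)) X)) (Conj B (Conj (Var z) X))"
  define F' where "F' = Disj (Conj B (Conj (Neg (Var z)) X)) (Conj B (Conj (Var z) X))"
  have k1: "1 \<le> k" and m1: "1 \<le> m" using pos[OF cl wA] pos[OF cl wB] k_def m_def by auto
  have rep: "replace_occ A B F F'" unfolding F_def F'_def
    by (intro replace_occ.intros)
  have wF: "wf_form C F" unfolding F_def X_def using wA wB chi_wf by auto
  have pe: "pref opt dg F = pref opt dg F'" using st wF rep unfolding strong_equiv_def by blast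
  define ag where "ag J = (\<forall>x\<in>set xs. (x\<in>J \<longleftrightarrow> x\<in>I))" for J
  have dA: "ag J \<Longrightarrow> fdeg opt dg J A = k" for J
    unfolding k_def ag_def xs_def by (rule coinc) auto
  have dB: "ag J \<Longrightarrow> fdeg opt dg J B = m" for J
    unfolding m_def ag_def xs_def by (rule coinc) auto
  have X1: "fdeg opt dg J X = (if ag J then 1 else \<infinity>)" for J
    unfolding X_def chi_deg ag_def by simp
  have mx: "max (x::enat) 1 = x" if "1 \<le> x" for x using that by (simp add: max_def)
  have degF: "fdeg opt dg J F = (if ag J then (if z \<in> J then m else k) else \<infinity>)" for J
  proof (cases "ag J")
    case True
    then show ?thesis using dA[OF True] dB[OF True] k1 m1 X1[of J] mx
      unfolding F_def by (cases "z \<in> J") (simp_all add: min_def max_def)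
  next
    case False
    then show ?thesis using X1[of J] unfolding F_def by simp
  qed
  have degF': "fdeg opt dg J F' = (if ag J then m else \<infinity>)" for J
  proof (cases "ag J")
    case True
    then show ?thesis using dB[OF True] m1 X1[of J] mx
      unfolding F'_def by (cases "z \<in> J") (simp_all add: min_def max_def)
  next
    case False
    then show ?thesis using X1[of J] unfolding F'_def by simp
  qed
  define J0 where "J0 = I - {z}"
  define J1 where "J1 = insert z I"
  have a0: "ag J0" and a1: "ag J1" using z unfolding ag_def J0_def J1_def by auto
  have z0: "z \<notin> J0" and z1: "z \<in> J1" unfolding J0_def J1_def by auto
  have d0: "fdeg opt dg J0 F = k" "fdeg opt dg J0 F' = m"
    and d1: "fdeg opt dg J1 F = m" "fdeg opt dg J1 F' = m"
    using degF degF' a0 a1 z0 z1 by auto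
  have kne: "k \<noteq> m" using ne k_def m_def by auto
  show False
  proof (cases "k < m")
    case True
    show False
    proof (cases "m = \<infinity>")
      case True
      have "J0 \<in> pref opt dg F" unfolding pref_def using d0 \<open>k < m\<close> True degF
        by auto
      moreover have "J0 \<notin> pref opt dg F'" unfolding pref_def using d0 True by auto
      ultimately show False using pe by simp
    next
      case False
      have "J1 \<in> pref opt dg F'" unfolding pref_def using d1 False degF' by auto
      moreover have "J1 \<notin> pref opt dg F" unfolding pref_def using d0 d1 \<open>k < m\<close>
        by (auto simp: not_le intro!: exI[of _ J0])
      ultimately show False using pe by simp
    qed
  next
    case False
    hence mk: "m < k" using kne by auto
    hence mi: "m \<noteq> \<infinity>" using enat_ord_simps(4) by (cases m) auto
    have "J0 \<in> pref opt dg F'" unfolding pref_def using d0 mi degF' by auto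
    moreover have "J0 \<notin> pref opt dg F" unfolding pref_def using d0 d1 mk
      by (auto simp: not_le intro!: exI[of _ J1])
    ultimately show False using pe by simp
  qed
qed

theorem mainTheorem8:
  fixes C :: "'c set"
    and opt :: "'c \<Rightarrow> nat \<Rightarrow> nat \<Rightarrow> nat"
    and dg :: "'c \<Rightarrow> nat \<Rightarrow> nat \<Rightarrow> enat \<Rightarrow> enat \<Rightarrow> enat"
    and A B :: "'c form"
  assumes "choice_logic C opt dg"
    and "opt_differentiating C opt dg"
    and "wf_form C A" and "wf_form C B"
  shows "strong_equiv C opt dg A B \<longleftrightarrow> full_equiv opt dg A B"
proof
  assume st: "strong_equiv C opt dg A B"
  have de: "deg_equiv opt dg A B" using strong_deg[OF assms(1,3,4) st] .
  have "fopt opt A = fopt opt B"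
  proof (rule ccontr)
    assume "fopt opt A \<noteq> fopt opt B"
    then obtain F F' where F: "wf_form C F" "replace_occ A B F F'" "\<not> deg_equiv opt dg F F'"
      using assms(2,3,4) unfolding opt_differentiating_def by blast
    have wF': "wf_form C F'" using repl_wf[OF F(2) F(1) assms(4)] .
    have "strong_equiv C opt dg F F'" unfolding strong_equiv_def
      using st repl_comp[OF _ F(2)] unfolding strong_equiv_def by blast
    from strong_deg[OF assms(1) F(1) wF' this] F(3) show False by simp
  qed
  with de show "full_equiv opt dg A B" unfolding full_equiv_def by simp
next
  assume fe: "full_equiv opt dg A B"
  show "strong_equiv C opt dg A B" unfolding strong_equiv_def pref_def
    using full_repl[OF _ fe] unfolding full_equiv_def deg_equiv_def by simp
qed

end
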